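(* For every smooth $G$ supported on $[0,1]\times[0,1]$, $$\Big\|\sum_{n,m\in\mathbb{Z}}\langle G,\varphi_{n,m}\otimes\overline{\varphi_{n,m}}\rangle(\chi_n\otimes\chi_m)\Big\|_{L^2(\mathbb{R}^2)}\lesssim\Big(\iint_{[0,1]^2}\frac{|G(s,t)|^2}{|s-t|}\,ds\,dt\Big)^{1/2}.$$
   Context: Fix $\varphi\in C_c^\infty(\mathbb{R})$ supported in a small open neighborhood of $[0,1]$ with $\varphi\equiv1$ on $[0,1]$; $\varphi_{n,m}(x)=\varphi(x)e^{2\pi inx}e^{2\pi imx^2}$; $\chi_n$ is the indicator of $[n,n+1)$; $(\varphi_{n,m}\otimes\overline{\varphi_{n,m}})(s,t)=\varphi_{n,m}(s)\overline{\varphi_{n,m}(t)}$; $\langle u,v\rangle=\iint u\bar v$. *)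

theory Defs
  imports "HOL-Analysis.Analysis"
begin

text \<open>C-infinity smoothness on a Euclidean space: f is differentiable everywhere and all
  its partial derivatives (along basis vectors) are again smooth (greatest fixed point).\<close>
coinductive smooth :: "('a::euclidean_space \<Rightarrow> 'b::real_normed_vector) \<Rightarrow> bool" where
  "(\<forall>x. f differentiable (at x)) \<Longrightarrow>
   (\<forall>i\<in>Basis. smooth (\<lambda>x. frechet_derivative f (at x) i)) \<Longrightarrow> smooth f"

definition phinm :: "(real \<Rightarrow> complex) \<Rightarrow> int \<Rightarrow> int \<Rightarrow> real \<Rightarrow> complex" where
  "phinm \<phi> n m x = \<phi> x * exp (2 * pi * \<i> * of_int n * of_real x)
                          * exp (2 * pi * \<i> * of_int m * of_real (x^2))"

definition coef :: "(real \<Rightarrow> complex) \<Rightarrow> (real \<times> real \<Rightarrow> complex) \<Rightarrow> int \<Rightarrow> int \<Rightarrow> complex" where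
  "coef \<phi> G n m = (\<integral>z. G z * cnj (phinm \<phi> n m (fst z) * cnj (phinm \<phi> n m (snd z))) \<partial>lborel)"

definition chi :: "int \<Rightarrow> real \<Rightarrow> complex" where
  "chi n x = indicator {real_of_int n..<real_of_int n + 1} x"

definition bigF :: "(real \<Rightarrow> complex) \<Rightarrow> (real \<times> real \<Rightarrow> complex) \<Rightarrow> real \<times> real \<Rightarrow> complex" where
  "bigF \<phi> G z = (\<Sum>\<^sub>\<infinity>(n,m)\<in>(UNIV :: (int \<times> int) set).
                      coef \<phi> G n m * chi n (fst z) * chi m (snd z))"

end

theory Submission
  imports Defs
begin

definition ee :: "real \<Rightarrow> complex" where "ee x = exp (2 * pi * \<i> * complex_of_real x)"

lemma ee_norm[simp]: "cmod (ee x) = 1"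
  unfolding ee_def by (simp add: norm_exp_eq_Re)
lemma ee_add: "ee (x + y) = ee x * ee y"
  unfolding ee_def by (simp add: distrib_left exp_add)
lemma ee_cnj: "cnj (ee x) = ee (- x)"
  unfolding ee_def by (simp add: exp_cnj)
lemma ee_int: "ee (of_int k) = 1"
  unfolding ee_def using exp_integer_2pi[of "of_int k"] by (simp add: mult.commute mult.left_commute)
lemma ee_cont[continuous_intros]: "continuous_on S ee"
  unfolding ee_def by (intro continuous_intros)
lemma ee_cont'[continuous_intros]: "continuous_on S f \<Longrightarrow> continuous_on S (\<lambda>x. ee (f x))"
  by (rule continuous_on_compose2[OF ee_cont[of UNIV]]) auto
lemma ee_meas[measurable]: "ee \<in> borel_measurable borel"
  by (intro borel_measurable_continuous_onI ee_cont)
lemma ee_deriv: "((\<lambda>x. ee (\<mu> * x)) has_vector_derivative (2 * pi * \<i> * \<mu>) * ee (\<mu> * x)) (at x within S)"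
proof -
  have "((\<lambda>z. exp (2 * pi * \<i> * \<mu> * z)) has_field_derivative (2 * pi * \<i> * \<mu>) * exp (2 * pi * \<i> * \<mu> * of_real x)) (at (of_real x))"
    by (auto intro!: derivative_eq_intros)
  from has_vector_derivative_real_field[OF this] show ?thesis
    unfolding ee_def by (simp add: mult.assoc)
qed

lemma cnj_meas[measurable]: "(f::'a \<Rightarrow> complex) \<in> borel_measurable M \<Longrightarrow> (\<lambda>x. cnj (f x)) \<in> borel_measurable M"
  by (rule borel_measurable_continuous_on[OF continuous_on_cnj[OF continuous_on_id]])

lemma cnj_sq: "cnj z * z = complex_of_real ((cmod z)\<^sup>2)" "z * cnj z = complex_of_real ((cmod z)\<^sup>2)"
  using complex_norm_square[of z] by (simp_all add: mult.commute)

lemma int_bs: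
  fixes f :: "real \<Rightarrow> 'b::{banach,second_countable_topology}"
  assumes "f \<in> borel_measurable lborel" "\<And>x. norm (f x) \<le> C" "\<And>x. x \<notin> {a..b} \<Longrightarrow> f x = 0"
  shows "integrable lborel f"
proof (rule Bochner_Integration.integrable_bound[of lborel "\<lambda>x. indicator {a..b} x * C" f])
  show "integrable lborel (\<lambda>x. indicator {a..b} x * C)" by (simp add: integrable_indicator_iff emeasure_lborel_Icc_eq)
  show "f \<in> borel_measurable lborel" by fact
  show "AE x in lborel. norm (f x) \<le> norm (indicator {a..b} x * C)"
    using assms(2,3) by (auto split: split_indicator intro!: AE_I2 order_trans[OF _ abs_ge_self])
qed
lemma orth:
  assumes L: "L > 0" and j: "\<mu> * L = of_int j"
  shows "(\<integral>x. indicator {a..a+L} x *\<^sub>R ee (\<mu> * x) \<partial>lborel) = (if \<mu> = 0 then complex_of_real L else 0)"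
proof (cases "\<mu> = 0")
  case True
  then show ?thesis using L by (simp add: ee_def scaleR_conv_of_real)
next
  case False
  define c where "c = inverse (2 * pi * \<i> * complex_of_real \<mu>)"
  have cc: "c * (2 * pi * \<i> * complex_of_real \<mu>) = 1"
    using False unfolding c_def by (simp add: field_simps)
  have "(LBINT x=a..a+L. ee (\<mu> * x)) = c * ee (\<mu> * (a+L)) - c * ee (\<mu> * a)"
  proof (rule interval_integral_FTC_finite)
    show "continuous_on {min a (a + L)..max a (a + L)} (\<lambda>x. ee (\<mu> * x))"
      by (intro continuous_on_compose2[OF ee_cont] continuous_intros) auto
    fix x
    show "((\<lambda>x. c * ee (\<mu> * x)) has_vector_derivative ee (\<mu> * x)) (at x within {min a (a + L)..max a (a + L)})"
      using has_vector_derivative_mult_right[OF ee_deriv[of \<mu> x], of c] cc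
      by (simp add: mult.assoc[symmetric])
  qed
  also have "\<dots> = 0"
    using j by (simp add: distrib_left ee_add ee_int)
  finally show ?thesis
    using L False by (simp add: interval_integral_Icc set_lebesgue_integral_def)
qed
lemma bessel:
  fixes g :: "real \<Rightarrow> complex"
  assumes gm[measurable]: "g \<in> borel_measurable lborel" and gB: "\<And>x. cmod (g x) \<le> B"
    and gs: "\<And>x. x \<notin> {a..a+L} \<Longrightarrow> g x = 0" and L: "L > 0"
    and j: "lam * L = of_int j" "j \<noteq> 0" and N: "finite N"
  shows "(\<Sum>n\<in>N. (cmod (\<integral>x. g x * ee (- (lam * of_int n * x)) \<partial>lborel))\<^sup>2)
           \<le> L * (\<integral>x. (cmod (g x))\<^sup>2 \<partial>lborel)"
proof -
  define I where "I = {a..a+L}"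
  define c where "c n = (\<integral>x. g x * ee (- (lam * of_int n * x)) \<partial>lborel)" for n :: int
  define h where "h x = complex_of_real (indicator I x) * (\<Sum>n\<in>N. c n * ee (lam * of_int n * x))" for x
  define S where "S = (\<Sum>n\<in>N. (cmod (c n))\<^sup>2)"
  define Q where "Q = (\<integral>x. (cmod (g x))\<^sup>2 \<partial>lborel)"
  define Hc where "Hc = (\<Sum>n\<in>N. cmod (c n))"
  have lam0: "lam \<noteq> 0" using j L by auto
  have B0: "0 \<le> B" by (rule order_trans[OF norm_ge_zero gB])
  have hm[measurable]: "h \<in> borel_measurable lborel" unfolding h_def I_def by measurable
  have hB: "cmod (h x) \<le> Hc" for x
  proof -
    have "cmod (h x) \<le> 1 * cmod (\<Sum>n\<in>N. c n * ee (lam * of_int n * x))"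
      unfolding h_def norm_mult by (intro mult_right_mono) (auto split: split_indicator)
    also have "\<dots> \<le> Hc" unfolding Hc_def
      by (auto intro!: order_trans[OF norm_sum] sum_mono simp: norm_mult)
    finally show ?thesis .
  qed
  have hs: "x \<notin> {a..a+L} \<Longrightarrow> h x = 0" for x unfolding h_def I_def by simp
  have gI: "g x * complex_of_real (indicator I x) = g x" for x
    using gs[of x] unfolding I_def by (auto split: split_indicator)
  have igg: "integrable lborel (\<lambda>x. g x * cnj (g x))"
    by (rule int_bs[where C="B*B" and a=a and b="a+L"]) (measurable, auto simp: norm_mult gs intro!: mult_mono gB B0)
  have igh: "integrable lborel (\<lambda>x. g x * cnj (h x))"
    by (rule int_bs[where C="B*Hc" and a=a and b="a+L"]) (measurable, auto simp: norm_mult gs intro!: mult_mono gB B0 hB)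
  have ihg: "integrable lborel (\<lambda>x. h x * cnj (g x))"
    by (rule int_bs[where C="Hc*B" and a=a and b="a+L"]) (measurable, auto simp: norm_mult hs intro!: mult_mono gB hB order_trans[OF _ hB])
  have ihh: "integrable lborel (\<lambda>x. h x * cnj (h x))"
    by (rule int_bs[where C="Hc*Hc" and a=a and b="a+L"]) (measurable, auto simp: norm_mult hs intro!: mult_mono hB order_trans[OF _ hB])
  have ige: "integrable lborel (\<lambda>x. g x * ee (- (lam * of_int n * x)))" for n
    by (rule int_bs[where C="B" and a=a and b="a+L"]) (measurable, auto simp: norm_mult gs gB)
  have iie: "integrable lborel (\<lambda>x. indicator I x *\<^sub>R ee (\<mu> * x))" for \<mu>
    by (rule int_bs[where C="1" and a=a and b="a+L"]) (measurable, auto simp: I_def split: split_indicator)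
  have i1: "(\<integral>x. g x * cnj (h x) \<partial>lborel) = complex_of_real S"
  proof -
    have "(\<lambda>x. g x * cnj (h x)) = (\<lambda>x. \<Sum>n\<in>N. cnj (c n) * (g x * ee (- (lam * of_int n * x))))"
    proof
      fix x
      have "g x * cnj (h x) = (g x * complex_of_real (indicator I x)) * (\<Sum>n\<in>N. cnj (c n) * ee (- (lam * of_int n * x)))"
        unfolding h_def by (simp add: ee_cnj mult.assoc)
      also have "\<dots> = (\<Sum>n\<in>N. cnj (c n) * (g x * ee (- (lam * of_int n * x))))"
        unfolding gI by (simp add: sum_distrib_left mult_ac)
      finally show "g x * cnj (h x) = (\<Sum>n\<in>N. cnj (c n) * (g x * ee (- (lam * of_int n * x))))" .
    qed
    then have "(\<integral>x. g x * cnj (h x) \<partial>lborel) = (\<Sum>n\<in>N. cnj (c n) * c n)"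
      by (simp add: Bochner_Integration.integral_sum ige c_def)
    also have "\<dots> = complex_of_real S"
      unfolding S_def by (simp only: of_real_sum cnj_sq)
    finally show ?thesis .
  qed
  have i2: "(\<integral>x. h x * cnj (h x) \<partial>lborel) = complex_of_real (L * S)"
  proof -
    have hh: "(\<lambda>x. h x * cnj (h x)) = (\<lambda>x. \<Sum>n\<in>N. \<Sum>k\<in>N. (c n * cnj (c k)) * (indicator I x *\<^sub>R ee ((lam * of_int (n - k)) * x)))"
    proof
      fix x
      have e: "ee (lam * of_int n * x) * ee (- (lam * of_int k * x)) = ee ((lam * of_int (n - k)) * x)" for n k
        by (simp add: ee_add[symmetric] algebra_simps)
      have "h x * cnj (h x) = complex_of_real (indicator I x) * ((\<Sum>n\<in>N. c n * ee (lam * of_int n * x)) * (\<Sum>k\<in>N. cnj (c k) * ee (- (lam * of_int k * x))))"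
        unfolding h_def by (simp add: ee_cnj split: split_indicator)
      also have "\<dots> = (\<Sum>n\<in>N. \<Sum>k\<in>N. (c n * cnj (c k)) * (indicator I x *\<^sub>R ee ((lam * of_int (n - k)) * x)))"
        apply (subst sum_product)
        apply (subst sum_distrib_left)
        apply (intro sum.cong refl)
        apply (subst sum_distrib_left)
        apply (intro sum.cong refl)
        apply (simp add: ee_add[symmetric] scaleR_conv_of_real mult_ac right_diff_distrib)
        done
      finally show "h x * cnj (h x) = (\<Sum>n\<in>N. \<Sum>k\<in>N. (c n * cnj (c k)) * (indicator I x *\<^sub>R ee ((lam * of_int (n - k)) * x)))" .
    qed
    then have "(\<integral>x. h x * cnj (h x) \<partial>lborel) = (\<Sum>n\<in>N. \<Sum>k\<in>N. (c n * cnj (c k)) * (if lam * of_int (n - k) = 0 then complex_of_real L else 0))"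
    proof -
      have o: "(\<integral>x. indicator I x *\<^sub>R ee ((lam * of_int (n - k)) * x) \<partial>lborel) = (if lam * of_int (n-k) = 0 then complex_of_real L else 0)" for n k
        unfolding I_def using L by (intro orth[where j="j * (n - k)"]) (simp_all only: of_int_mult j(1)[symmetric] mult_ac)
      have iie2: "integrable lborel (\<lambda>x. (c n * cnj (c k)) * (indicator I x *\<^sub>R ee ((lam * of_int (n - k)) * x)))" for n k
        by (rule Bochner_Integration.integrable_mult_right[OF iie])
      show ?thesis
        unfolding hh by (simp only: Bochner_Integration.integral_sum iie2 Bochner_Integration.integrable_sum integral_mult_right_zero o)
    qed
    also have "\<dots> = (\<Sum>n\<in>N. \<Sum>k\<in>N. if k = n then (c n * cnj (c n)) * complex_of_real L else 0)"
      using lam0 by (intro sum.cong refl) auto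
    also have "\<dots> = complex_of_real (L * S)"
      using N unfolding S_def by (simp add: cnj_sq sum_distrib_left sum_distrib_right mult_ac)
    finally show ?thesis .
  qed
  define d where "d x = g x - h x / complex_of_real L" for x
  have "0 \<le> (\<integral>x. (cmod (d x))\<^sup>2 \<partial>lborel)" by (rule integral_nonneg_AE) simp
  moreover have "complex_of_real (\<integral>x. (cmod (d x))\<^sup>2 \<partial>lborel) = complex_of_real (Q - S / L)"
  proof -
    have "complex_of_real (\<integral>x. (cmod (d x))\<^sup>2 \<partial>lborel) = (\<integral>x. d x * cnj (d x) \<partial>lborel)"
      by (simp only: integral_complex_of_real[symmetric] cnj_sq)
    also have "(\<lambda>x. d x * cnj (d x)) = (\<lambda>x. g x * cnj (g x) - (g x * cnj (h x)) / complex_of_real L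
           - (h x * cnj (g x)) / complex_of_real L + (h x * cnj (h x)) / complex_of_real (L * L))"
    proof (intro ext)
      fix x
      have Lc: "complex_of_real L \<noteq> 0" using L by simp
      show "d x * cnj (d x) = g x * cnj (g x) - (g x * cnj (h x)) / complex_of_real L
           - (h x * cnj (g x)) / complex_of_real L + (h x * cnj (h x)) / complex_of_real (L * L)"
        unfolding d_def using Lc by (simp add: field_simps power2_eq_square)
    qed
    also have "(\<integral>x. g x * cnj (g x) - (g x * cnj (h x)) / complex_of_real L
           - (h x * cnj (g x)) / complex_of_real L + (h x * cnj (h x)) / complex_of_real (L * L) \<partial>lborel)
        = (\<integral>x. g x * cnj (g x) \<partial>lborel) - (\<integral>x. g x * cnj (h x) \<partial>lborel) / complex_of_real L
           - (\<integral>x. h x * cnj (g x) \<partial>lborel) / complex_of_real L + (\<integral>x. h x * cnj (h x) \<partial>lborel) / complex_of_real (L * L)"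
      using igg igh ihg ihh by simp
    also have "(\<integral>x. h x * cnj (g x) \<partial>lborel) = cnj (\<integral>x. g x * cnj (h x) \<partial>lborel)"
      by (subst Bochner_Integration.integral_cnj[symmetric]) (simp add: mult.commute)
    also have "(\<integral>x. g x * cnj (g x) \<partial>lborel) = complex_of_real Q"
      unfolding Q_def by (simp only: integral_complex_of_real[symmetric] cnj_sq)
    moreover have "complex_of_real (L * S) / complex_of_real (L * L) = complex_of_real (S / L)"
      using L by (simp add: field_simps)
    ultimately show ?thesis unfolding i1 i2 by simp

  qed
  ultimately have "0 \<le> Q - S / L" by (simp only: of_real_eq_iff)
  then show ?thesis using L unfolding S_def Q_def c_def by (simp add: field_simps)
qed


lemma int_bs2:
  fixes f :: "'a::euclidean_space \<Rightarrow> 'b::{banach,second_countable_topology}"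
  assumes "f \<in> borel_measurable lborel" "\<And>x. norm (f x) \<le> C" "\<And>x. x \<notin> cbox a b \<Longrightarrow> f x = 0"
  shows "integrable lborel f"
proof (rule Bochner_Integration.integrable_bound[of lborel "\<lambda>x. indicator (cbox a b) x * C" f])
  show "integrable lborel (\<lambda>x. indicator (cbox a b) x * C)"
    by (simp add: integrable_indicator_iff emeasure_lborel_cbox_eq)
  show "f \<in> borel_measurable lborel" by fact
  show "AE x in lborel. norm (f x) \<le> norm (indicator (cbox a b) x * C)"
    using assms(2,3) by (auto split: split_indicator intro!: AE_I2 order_trans[OF _ abs_ge_self])
qed

lemma floor_sum_le:
  fixes f :: "int \<Rightarrow> ennreal"
  assumes "\<And>N. finite N \<Longrightarrow> (\<Sum>n\<in>N. f n) \<le> B"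
  shows "(\<integral>\<^sup>+ x. f \<lfloor>x::real\<rfloor> \<partial>lborel) \<le> B"
proof -
  define F where "F k x = f \<lfloor>x\<rfloor> * indicator {- real k..<real k} x" for k :: nat and x :: real
  have inc: "incseq F"
    unfolding F_def incseq_def le_fun_def
    by (auto intro!: mult_left_mono split: split_indicator)
  have meas: "F k \<in> borel_measurable lborel" for k
    unfolding F_def by measurable
  have sup: "(SUP k. F k x) = f \<lfloor>x\<rfloor>" for x
  proof (rule antisym)
    show "(SUP k. F k x) \<le> f \<lfloor>x\<rfloor>"
      unfolding F_def by (rule SUP_least) (auto split: split_indicator)
    obtain k :: nat where "\<bar>x\<bar> < real k" using reals_Archimedean2 by blast
    then have "F k x = f \<lfloor>x\<rfloor>" unfolding F_def by (auto split: split_indicator)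
    then show "f \<lfloor>x\<rfloor> \<le> (SUP k. F k x)" by (metis SUP_upper UNIV_I)
  qed
  have fin: "integral\<^sup>N lborel (F k) \<le> B" for k
  proof -
    have "F k x = (\<Sum>n\<in>{- int k..<int k}. f n * indicator {real_of_int n..<real_of_int n + 1} x)" for x
    proof (cases "x \<in> {- real k..<real k}")
      case True
      then have flr: "\<lfloor>x\<rfloor> \<in> {- int k..<int k}" by (auto simp: le_floor_iff floor_less_iff)
      have ind: "indicator {real_of_int n..<real_of_int n + 1} x = (if n = \<lfloor>x\<rfloor> then 1 else (0::ennreal))" for n
        by (auto split: split_indicator simp: floor_eq_iff intro: floor_unique[symmetric])
      have "(\<Sum>n\<in>{- int k..<int k}. f n * indicator {real_of_int n..<real_of_int n + 1} x) = (\<Sum>n\<in>{- int k..<int k}. if n = \<lfloor>x\<rfloor> then f n else 0)"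
        by (intro sum.cong) (simp_all add: ind)
      also have "\<dots> = f \<lfloor>x\<rfloor>" using flr by (simp add: sum.delta')
      finally show ?thesis using True unfolding F_def by simp
    next
      case False
      have "indicator {real_of_int n..<real_of_int n + 1} x = (0::ennreal)" if "n \<in> {- int k..<int k}" for n
        using False that by (auto split: split_indicator)
      then show ?thesis using False unfolding F_def by simp
    qed
    then have "integral\<^sup>N lborel (F k) = (\<integral>\<^sup>+ x. (\<Sum>n\<in>{- int k..<int k}. f n * indicator {real_of_int n..<real_of_int n + 1} x) \<partial>lborel)"
      by (intro nn_integral_cong) (simp only:)
    also have "\<dots> = (\<Sum>n\<in>{- int k..<int k}. \<integral>\<^sup>+ x. f n * indicator {real_of_int n..<real_of_int n + 1} x \<partial>lborel)"
      by (rule nn_integral_sum) simp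
    also have "\<dots> = (\<Sum>n\<in>{- int k..<int k}. f n)"
      by (simp add: nn_integral_cmult_indicator)
    also have "\<dots> \<le> B" by (rule assms) simp
    finally show ?thesis .
  qed
  have "(\<integral>\<^sup>+ x. f \<lfloor>x::real\<rfloor> \<partial>lborel) = (\<integral>\<^sup>+ x. (SUP k. F k x) \<partial>lborel)" by (simp add: sup)
  also have "\<dots> = (SUP k. integral\<^sup>N lborel (F k))"
    by (rule nn_integral_monotone_convergence_SUP[OF inc meas])
  also have "\<dots> \<le> B" by (rule SUP_least) (rule fin)
  finally show ?thesis .
qed


definition AA :: "(real \<times> real \<Rightarrow> complex) \<Rightarrow> int \<Rightarrow> real \<Rightarrow> complex" where
  "AA G m u = (\<integral>t. G (t + u, t) * ee (- (of_int m * (u\<^sup>2 + 2 * u * t))) \<partial>lborel)"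

lemma fst_meas[measurable]: "(fst :: real \<times> real \<Rightarrow> real) \<in> borel_measurable borel"
  by (intro borel_measurable_continuous_onI continuous_intros)
lemma snd_meas[measurable]: "(snd :: real \<times> real \<Rightarrow> real) \<in> borel_measurable borel"
  by (intro borel_measurable_continuous_onI continuous_intros)

context
  fixes G :: "real \<times> real \<Rightarrow> complex" and GB :: real
  assumes Gc: "continuous_on UNIV G"
    and Gs: "\<And>s t. G (s, t) \<noteq> 0 \<Longrightarrow> s \<in> {0..1} \<and> t \<in> {0..1}"
    and GB: "\<And>z. cmod (G z) \<le> GB"
begin

lemma Gm[measurable]: "G \<in> borel_measurable borel"
  by (rule borel_measurable_continuous_onI[OF Gc])

lemma Gm2[measurable]: "G \<in> borel_measurable (lborel \<Otimes>\<^sub>M lborel)"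
  by (simp add: lborel_prod)

lemma Gc'[continuous_intros]: "continuous_on S f \<Longrightarrow> continuous_on S (\<lambda>x. G (f x))"
  by (rule continuous_on_compose2[OF Gc]) auto

lemma GB0: "0 \<le> GB"
  by (rule order_trans[OF norm_ge_zero GB])

lemma Gs': "\<not> (s \<in> {0..1} \<and> t \<in> {0..1}) \<Longrightarrow> G (s, t) = 0"
  using Gs by blast

lemma A_meas[measurable]: "AA G m \<in> borel_measurable lborel"
  unfolding AA_def by measurable

lemma A_supp: "u \<notin> {-1..1} \<Longrightarrow> AA G m u = 0"
proof -
  assume u: "u \<notin> {-1..1}"
  have "G (t + u, t) = 0" for t using u by (intro Gs') auto
  then show ?thesis unfolding AA_def by simp
qed

lemma A_bound: "cmod (AA G m u) \<le> GB"
proof -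
  have i1: "integrable lborel (\<lambda>t. cmod (G (t + u, t) * ee (- (of_int m * (u\<^sup>2 + 2 * u * t)))))"
    by (rule int_bs[where C=GB and a=0 and b=1]) (measurable, auto simp: norm_mult GB Gs')
  have i2: "integrable lborel (\<lambda>t::real. indicator {0..1} t * GB)"
    using emeasure_lborel_Icc[of "0::real" 1] by (simp add: integrable_indicator_iff)
  have "cmod (AA G m u) \<le> (\<integral>t. cmod (G (t + u, t) * ee (- (of_int m * (u\<^sup>2 + 2 * u * t)))) \<partial>lborel)"
    unfolding AA_def by (rule integral_norm_bound)
  also have "\<dots> \<le> (\<integral>t. indicator {0..1::real} t * GB \<partial>lborel)"
    by (rule integral_mono[OF i1 i2]) (auto simp: norm_mult GB Gs' split: split_indicator)
  also have "\<dots> = GB" by simp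
  finally show ?thesis .
qed

lemma coef_A:
  assumes phi1: "\<forall>x\<in>{0..1}. \<phi> x = 1"
  shows "coef \<phi> G n m = (\<integral>u. AA G m u * ee (- (1 * of_int n * u)) \<partial>lborel)"
proof -
  define K where "K z = G z * ee (- (of_int n * (fst z - snd z) + of_int m * ((fst z)\<^sup>2 - (snd z)\<^sup>2)))" for z
  have Km[measurable]: "K \<in> borel_measurable borel" unfolding K_def
    by (intro borel_measurable_continuous_onI continuous_intros)
  have Km2[measurable]: "K \<in> borel_measurable (lborel \<Otimes>\<^sub>M lborel)" by (simp add: lborel_prod)
  have ph: "phinm \<phi> n m x = ee (of_int n * x + of_int m * x\<^sup>2)" if "x \<in> {0..1}" for x
    using phi1 that unfolding phinm_def ee_def by (simp add: exp_add[symmetric] algebra_simps)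
  have c1: "coef \<phi> G n m = (\<integral>z. K z \<partial>lborel)"
    unfolding coef_def
  proof (intro Bochner_Integration.integral_cong refl)
    fix z :: "real \<times> real"
    obtain s t where z: "z = (s, t)" by (cases z)
    show "G z * cnj (phinm \<phi> n m (fst z) * cnj (phinm \<phi> n m (snd z))) = K z"
    proof (cases "G z = 0")
      case True then show ?thesis unfolding K_def by simp
    next
      case False
      then have st: "s \<in> {0..1}" "t \<in> {0..1}" using Gs z by auto
      show ?thesis unfolding K_def z using st
        by (simp add: ph ee_cnj ee_add[symmetric] algebra_simps)
    qed
  qed
  have iK: "integrable lborel K"
    by (rule int_bs2[where C=GB and a="(0,0)" and b="(1,1)"])
       (auto simp: K_def norm_mult GB cbox_Pair_eq split_beta dest!: Gs)
  have iK2: "integrable lborel (\<lambda>z. K (snd z + fst z, snd z))"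
    by (rule int_bs2[where C=GB and a="(-1,0)" and b="(1,1)"])
       (measurable, auto simp: K_def norm_mult GB cbox_Pair_eq split_beta dest!: Gs)
  have c2: "(\<integral>z. K z \<partial>lborel) = (\<integral>t. \<integral>s. K (s, t) \<partial>lborel \<partial>lborel)"
    using lborel_pair.integral_snd[of "\<lambda>s t. K (s, t)"] iK by (simp add: lborel_prod)
  also have "\<dots> = (\<integral>t. \<integral>u. K (t + u, t) \<partial>lborel \<partial>lborel)"
    using lborel_integral_real_affine[where c=1, of "\<lambda>s. K (s, t)" t for t] by simp
  also have "\<dots> = (\<integral>u. \<integral>t. K (t + u, t) \<partial>lborel \<partial>lborel)"
    using lborel_pair.Fubini_integral[of "\<lambda>u t. K (t + u, t)"] iK2 by (simp add: lborel_prod split_beta')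
  also have "\<dots> = (\<integral>u. AA G m u * ee (- (1 * of_int n * u)) \<partial>lborel)"
  proof (intro Bochner_Integration.integral_cong refl)
    fix u
    have "K (t + u, t) = ee (- (1 * of_int n * u)) * (G (t + u, t) * ee (- (of_int m * (u\<^sup>2 + 2 * u * t))))" for t
      unfolding K_def by (simp add: ee_add[symmetric] power2_eq_square algebra_simps)
    then show "(\<integral>t. K (t + u, t) \<partial>lborel) = AA G m u * ee (- (1 * of_int n * u))"
      unfolding AA_def by (simp add: mult.commute)
  qed
  finally show ?thesis using c1 by simp
qed

lemma step2:
  assumes phi1: "\<forall>x\<in>{0..1}. \<phi> x = 1" and N: "finite N"
  shows "(\<Sum>n\<in>N. (cmod (coef \<phi> G n m))\<^sup>2) \<le> 2 * (\<integral>u. (cmod (AA G m u))\<^sup>2 \<partial>lborel)"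
  unfolding coef_A[OF phi1]
  by (rule bessel[where g="AA G m" and B=GB and a="-1" and L=2 and lam=1 and j=2])
     (auto simp: A_bound A_supp N)

lemma step3:
  assumes u: "u \<noteq> 0" and M: "finite M"
  shows "(\<Sum>m\<in>M. (cmod (AA G m u))\<^sup>2) \<le> (1 / \<bar>u\<bar>) * (\<integral>t. (cmod (G (t + u, t)))\<^sup>2 \<partial>lborel)"
proof (cases "\<bar>u\<bar> \<le> 1")
  case False
  then have "AA G m u = 0" for m by (intro A_supp) auto
  then show ?thesis by (simp add: integral_nonneg_AE)
next
  case True
  define g where "g t = G (t + u, t)" for t
  have gm[measurable]: "g \<in> borel_measurable lborel" unfolding g_def by measurable
  have A_eq: "cmod (AA G m u) = cmod (\<integral>t. g t * ee (- (2 * u * of_int m * t)) \<partial>lborel)" for m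
  proof -
    have "AA G m u = (\<integral>t. ee (- (of_int m * u\<^sup>2)) * (g t * ee (- (2 * u * of_int m * t))) \<partial>lborel)"
      unfolding AA_def g_def
      by (intro Bochner_Integration.integral_cong refl) (simp add: ee_add[symmetric] algebra_simps)
    also have "\<dots> = ee (- (of_int m * u\<^sup>2)) * (\<integral>t. g t * ee (- (2 * u * of_int m * t)) \<partial>lborel)"
      by simp
    finally show ?thesis by (simp add: norm_mult)
  qed
  have L: "1 / \<bar>u\<bar> \<ge> 1" using True u by (simp add: field_simps)
  have j: "2 * u * (1 / \<bar>u\<bar>) = of_int (if u > 0 then 2 else -2)" using u by auto
  have "(\<Sum>m\<in>M. (cmod (\<integral>t. g t * ee (- (2 * u * of_int m * t)) \<partial>lborel))\<^sup>2) \<le> (1 / \<bar>u\<bar>) * (\<integral>t. (cmod (g t))\<^sup>2 \<partial>lborel)"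
  proof (rule bessel[where B=GB and a=0 and L="1 / \<bar>u\<bar>" and lam="2 * u" and j="if u > 0 then 2 else -2"])
    fix t assume "t \<notin> {0..0 + 1 / \<bar>u\<bar>}"
    then have "t \<notin> {0..1}" using L by auto
    then show "g t = 0" unfolding g_def by (intro Gs') auto
  qed (use u j M in \<open>auto simp: GB g_def\<close>)
  then show ?thesis unfolding A_eq g_def .
qed

lemma bigF_eq: "bigF \<phi> G (x, y) = coef \<phi> G \<lfloor>x\<rfloor> \<lfloor>y\<rfloor>"
proof -
  have chi: "chi n x = (if n = \<lfloor>x\<rfloor> then 1 else 0)" for n x
    unfolding chi_def by (auto split: split_indicator simp: floor_eq_iff intro: floor_unique[symmetric])
  have "bigF \<phi> G (x, y) = (\<Sum>\<^sub>\<infinity>p\<in>{(\<lfloor>x\<rfloor>, \<lfloor>y\<rfloor>)}. (case p of (n, m) \<Rightarrow> coef \<phi> G n m * chi n x * chi m y))"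
    unfolding bigF_def by (intro infsum_cong_neutral) (auto simp: chi split: if_splits)
  also have "\<dots> = coef \<phi> G \<lfloor>x\<rfloor> \<lfloor>y\<rfloor>" by (simp add: chi)
  finally show ?thesis .
qed

lemma RHS_eq:
  "(\<integral>\<^sup>+ u. ennreal ((1 / \<bar>u\<bar>) * (\<integral>t. (cmod (G (t + u, t)))\<^sup>2 \<partial>lborel)) \<partial>lborel)
    = (\<integral>\<^sup>+ z\<in>{0..1} \<times> {0..1}. ennreal ((cmod (G z))\<^sup>2 / \<bar>fst z - snd z\<bar>) \<partial>lborel)"
proof -
  have GB2: "(cmod (G z))\<^sup>2 \<le> GB * GB" for z
    unfolding power2_eq_square by (rule mult_mono[OF GB GB GB0 norm_ge_zero])
  have "(\<integral>\<^sup>+ u. ennreal ((1 / \<bar>u\<bar>) * (\<integral>t. (cmod (G (t + u, t)))\<^sup>2 \<partial>lborel)) \<partial>lborel)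
      = (\<integral>\<^sup>+ u. \<integral>\<^sup>+ t. ennreal ((cmod (G (t + u, t)))\<^sup>2 / \<bar>u\<bar>) \<partial>lborel \<partial>lborel)"
  proof (intro nn_integral_cong)
    fix u :: real
    have int: "integrable lborel (\<lambda>t. (cmod (G (t + u, t)))\<^sup>2 / \<bar>u\<bar>)"
      by (rule int_bs[where C="GB * GB / \<bar>u\<bar>" and a=0 and b=1])
         (measurable, auto simp: Gs' intro!: divide_right_mono GB2)
    have "(1 / \<bar>u\<bar>) * (\<integral>t. (cmod (G (t + u, t)))\<^sup>2 \<partial>lborel) = (\<integral>t. (cmod (G (t + u, t)))\<^sup>2 / \<bar>u\<bar> \<partial>lborel)"
      by simp
    then show "ennreal ((1 / \<bar>u\<bar>) * (\<integral>t. (cmod (G (t + u, t)))\<^sup>2 \<partial>lborel)) = (\<integral>\<^sup>+ t. ennreal ((cmod (G (t + u, t)))\<^sup>2 / \<bar>u\<bar>) \<partial>lborel)"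
      using nn_integral_eq_integral[OF int] by simp
  qed
  also have "\<dots> = (\<integral>\<^sup>+ t. \<integral>\<^sup>+ u. ennreal ((cmod (G (t + u, t)))\<^sup>2 / \<bar>u\<bar>) \<partial>lborel \<partial>lborel)"
  proof -
    have mF: "(\<lambda>(u, t). ennreal ((cmod (G (t + u, t)))\<^sup>2 / \<bar>u\<bar>)) \<in> borel_measurable (lborel \<Otimes>\<^sub>M lborel)"
      by measurable
    show ?thesis using lborel_pair.Fubini'[OF mF] by simp
  qed
  also have "\<dots> = (\<integral>\<^sup>+ t. \<integral>\<^sup>+ s. ennreal ((cmod (G (s, t)))\<^sup>2 / \<bar>s - t\<bar>) \<partial>lborel \<partial>lborel)"
  proof (rule nn_integral_cong)
    fix t :: real
    show "(\<integral>\<^sup>+ u. ennreal ((cmod (G (t + u, t)))\<^sup>2 / \<bar>u\<bar>) \<partial>lborel) = (\<integral>\<^sup>+ s. ennreal ((cmod (G (s, t)))\<^sup>2 / \<bar>s - t\<bar>) \<partial>lborel)"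
      using nn_integral_real_affine[where c=1 and t=t and f="\<lambda>s. ennreal ((cmod (G (s, t)))\<^sup>2 / \<bar>s - t\<bar>)"]
      by simp
  qed
  also have "\<dots> = (\<integral>\<^sup>+ z. ennreal ((cmod (G z))\<^sup>2 / \<bar>fst z - snd z\<bar>) \<partial>lborel)"
    using lborel_pair.nn_integral_snd[of "\<lambda>z. ennreal ((cmod (G z))\<^sup>2 / \<bar>fst z - snd z\<bar>)"]
    by (simp add: lborel_prod)
  also have "\<dots> = (\<integral>\<^sup>+ z\<in>{0..1} \<times> {0..1}. ennreal ((cmod (G z))\<^sup>2 / \<bar>fst z - snd z\<bar>) \<partial>lborel)"
    by (intro nn_integral_cong) (auto split: split_indicator dest!: Gs)
  finally show ?thesis .
qed

lemma main_bound:
  assumes phi1: "\<forall>x\<in>{0..1}. \<phi> x = 1"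
  shows "(\<integral>\<^sup>+ z. ennreal ((cmod (bigF \<phi> G z))\<^sup>2) \<partial>lborel)
     \<le> ennreal 2 * (\<integral>\<^sup>+ z\<in>{0..1} \<times> {0..1}. ennreal ((cmod (G z))\<^sup>2 / \<bar>fst z - snd z\<bar>) \<partial>lborel)"
proof -
  define H where "H n m = ennreal ((cmod (coef \<phi> G n m))\<^sup>2)" for n m
  have Hm: "(\<lambda>z::real\<times>real. H \<lfloor>fst z\<rfloor> \<lfloor>snd z\<rfloor>) \<in> borel_measurable (lborel \<Otimes>\<^sub>M lborel)"
    by measurable
  have iA: "integrable lborel (\<lambda>u. (cmod (AA G m u))\<^sup>2)" for m
    by (rule int_bs[where C="GB * GB" and a="-1" and b=1])
       (measurable, auto simp: A_supp power2_eq_square intro!: mult_mono A_bound GB0)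
  have "(\<integral>\<^sup>+ z. ennreal ((cmod (bigF \<phi> G z))\<^sup>2) \<partial>lborel) = (\<integral>\<^sup>+ z. H \<lfloor>fst (z::real\<times>real)\<rfloor> \<lfloor>snd z\<rfloor> \<partial>lborel)"
  proof (rule nn_integral_cong)
    fix z :: "real \<times> real"
    show "ennreal ((cmod (bigF \<phi> G z))\<^sup>2) = H \<lfloor>fst z\<rfloor> \<lfloor>snd z\<rfloor>"
      using bigF_eq[of \<phi> "fst z" "snd z"] by (simp add: H_def)
  qed
  also have "\<dots> = (\<integral>\<^sup>+ y. \<integral>\<^sup>+ x. H \<lfloor>x::real\<rfloor> \<lfloor>y::real\<rfloor> \<partial>lborel \<partial>lborel)"
    using lborel_pair.nn_integral_snd[OF Hm] by (simp add: lborel_prod)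
  also have "\<dots> \<le> (\<integral>\<^sup>+ y. ennreal (2 * (\<integral>u. (cmod (AA G \<lfloor>y::real\<rfloor> u))\<^sup>2 \<partial>lborel)) \<partial>lborel)"
  proof (rule nn_integral_mono)
    fix y :: real
    show "(\<integral>\<^sup>+ x. H \<lfloor>x::real\<rfloor> \<lfloor>y\<rfloor> \<partial>lborel) \<le> ennreal (2 * (\<integral>u. (cmod (AA G \<lfloor>y\<rfloor> u))\<^sup>2 \<partial>lborel))"
    proof (rule floor_sum_le[where f="\<lambda>n. H n \<lfloor>y\<rfloor>"])
    fix N :: "int set" assume N: "finite N"
    have "(\<Sum>n\<in>N. H n \<lfloor>y\<rfloor>) = ennreal (\<Sum>n\<in>N. (cmod (coef \<phi> G n \<lfloor>y\<rfloor>))\<^sup>2)"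
      unfolding H_def by (rule sum_ennreal) simp
    also have "\<dots> \<le> ennreal (2 * (\<integral>u. (cmod (AA G \<lfloor>y\<rfloor> u))\<^sup>2 \<partial>lborel))"
      by (rule ennreal_leI, rule step2[OF phi1 N])
    finally show "(\<Sum>n\<in>N. H n \<lfloor>y\<rfloor>) \<le> ennreal (2 * (\<integral>u. (cmod (AA G \<lfloor>y\<rfloor> u))\<^sup>2 \<partial>lborel))" .
    qed
  qed
  also have "\<dots> \<le> ennreal 2 * (\<integral>\<^sup>+ u. ennreal ((1 / \<bar>u\<bar>) * (\<integral>t. (cmod (G (t + u, t)))\<^sup>2 \<partial>lborel)) \<partial>lborel)"
  proof (rule floor_sum_le[where f="\<lambda>m. ennreal (2 * (\<integral>u. (cmod (AA G m u))\<^sup>2 \<partial>lborel))"])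
    fix M :: "int set" assume M: "finite M"
    have "(\<Sum>m\<in>M. ennreal (2 * (\<integral>u. (cmod (AA G m u))\<^sup>2 \<partial>lborel)))
        = ennreal (\<Sum>m\<in>M. 2 * (\<integral>u. (cmod (AA G m u))\<^sup>2 \<partial>lborel))"
      by (rule sum_ennreal) (simp add: integral_nonneg_AE)
    also have "(\<Sum>m\<in>M. 2 * (\<integral>u. (cmod (AA G m u))\<^sup>2 \<partial>lborel)) = 2 * (\<integral>u. (\<Sum>m\<in>M. (cmod (AA G m u))\<^sup>2) \<partial>lborel)"
      by (simp add: Bochner_Integration.integral_sum iA sum_distrib_left)
    also have "ennreal \<dots> = ennreal 2 * ennreal (\<integral>u. (\<Sum>m\<in>M. (cmod (AA G m u))\<^sup>2) \<partial>lborel)"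
      by (rule ennreal_mult) (auto intro!: integral_nonneg_AE AE_I2 sum_nonneg)
    also have "ennreal (\<integral>u. (\<Sum>m\<in>M. (cmod (AA G m u))\<^sup>2) \<partial>lborel) = (\<integral>\<^sup>+ u. ennreal (\<Sum>m\<in>M. (cmod (AA G m u))\<^sup>2) \<partial>lborel)"
      by (rule nn_integral_eq_integral[symmetric]) (auto simp: iA intro!: AE_I2 sum_nonneg)
    also have "\<dots> \<le> (\<integral>\<^sup>+ u. ennreal ((1 / \<bar>u\<bar>) * (\<integral>t. (cmod (G (t + u, t)))\<^sup>2 \<partial>lborel)) \<partial>lborel)"
    proof (rule nn_integral_mono_AE)
      show "AE u in lborel. ennreal (\<Sum>m\<in>M. (cmod (AA G m u))\<^sup>2) \<le> ennreal ((1 / \<bar>u\<bar>) * (\<integral>t. (cmod (G (t + u, t)))\<^sup>2 \<partial>lborel))"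
        using AE_lborel_singleton[of 0] by eventually_elim (intro ennreal_leI step3 M)
    qed
    finally show "(\<Sum>m\<in>M. ennreal (2 * (\<integral>u. (cmod (AA G m u))\<^sup>2 \<partial>lborel)))
       \<le> ennreal 2 * (\<integral>\<^sup>+ u. ennreal ((1 / \<bar>u\<bar>) * (\<integral>t. (cmod (G (t + u, t)))\<^sup>2 \<partial>lborel)) \<partial>lborel)"
      by (simp add: mult_left_mono)
  qed
  also have "\<dots> = ennreal 2 * (\<integral>\<^sup>+ z\<in>{0..1} \<times> {0..1}. ennreal ((cmod (G z))\<^sup>2 / \<bar>fst z - snd z\<bar>) \<partial>lborel)"
    by (simp only: RHS_eq)
  finally show ?thesis .
qed

end


lemma smooth_cont: "smooth f \<Longrightarrow> continuous_on UNIV f"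
  by (erule smooth.cases) (auto intro!: continuous_at_imp_continuous_on differentiable_imp_continuous_within)

theorem lemma6p2:
  fixes \<phi> :: "real \<Rightarrow> complex"
  assumes "smooth \<phi>"
    and "bounded {x. \<phi> x \<noteq> 0}"
    and "\<forall>x\<in>{0..1}. \<phi> x = 1"
  shows "\<exists>C. \<forall>G :: real \<times> real \<Rightarrow> complex.
           smooth G \<longrightarrow> (\<forall>s t. G (s, t) \<noteq> 0 \<longrightarrow> s \<in> {0..1} \<and> t \<in> {0..1}) \<longrightarrow>
           (\<integral>\<^sup>+ z. ennreal ((cmod (bigF \<phi> G z))^2) \<partial>lborel)
             \<le> ennreal C * (\<integral>\<^sup>+ z\<in>{0..1} \<times> {0..1}.
                               ennreal ((cmod (G z))^2 / \<bar>fst z - snd z\<bar>) \<partial>lborel)"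
proof (intro exI[of _ 2] allI impI)
  fix G :: "real \<times> real \<Rightarrow> complex"
  assume sm: "smooth G" and sp: "\<forall>s t. G (s, t) \<noteq> 0 \<longrightarrow> s \<in> {0..1} \<and> t \<in> {0..1}"
  have Gc: "continuous_on UNIV G" by (rule smooth_cont[OF sm])
  have Gs: "\<And>s t. G (s, t) \<noteq> 0 \<Longrightarrow> s \<in> {0..1} \<and> t \<in> {0..1}" using sp by blast
  have "compact (G ` cbox (0,0) (1,1))"
    by (rule compact_continuous_image[OF continuous_on_subset[OF Gc]]) auto
  then obtain GB where GB1: "\<And>y. y \<in> G ` cbox (0,0) (1,1) \<Longrightarrow> norm y \<le> GB"
    using compact_imp_bounded bounded_iff by metis
  have GB: "cmod (G z) \<le> GB" for z
  proof (cases "G z = 0")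
    case True
    have "cmod (G (0,0)) \<le> GB" by (rule GB1) (auto simp: cbox_Pair_eq)
    then show ?thesis using True by (metis norm_ge_zero norm_zero order_trans)
  next
    case False
    obtain s t where z: "z = (s, t)" by (cases z)
    with False Gs have "z \<in> cbox (0,0) (1,1)" by (auto simp: cbox_Pair_eq)
    then show ?thesis by (intro GB1) auto
  qed
  show "(\<integral>\<^sup>+ z. ennreal ((cmod (bigF \<phi> G z))^2) \<partial>lborel)
             \<le> ennreal 2 * (\<integral>\<^sup>+ z\<in>{0..1} \<times> {0..1}.
                               ennreal ((cmod (G z))^2 / \<bar>fst z - snd z\<bar>) \<partial>lborel)"
    by (rule main_bound[OF Gc Gs GB assms(3)])
qed

end
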